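(* Consider a Poisson random hypergraph on $N$ vertices with parameters $(\beta_j)_{j\ge2}$ such that, for some $k\ge3$, $\beta_j=1/(j(j-1))$ for all $2\le j\le k-1$, and let $\mu_k=k(k-1)\beta_k-1$. Fix $0\le r<1$. Then there exist a constant $C<\infty$ and $N_0$ such that for all $N\ge N_0$ and all real $0\le t\le rN$: $$\Big|N\lambda_2(N,t)-\Big(\sum_{i=0}^{k-3}\big(\tfrac tN\big)^i+k(k-1)\beta_k\big(\tfrac tN\big)^{k-2}\Big)\Big|\le C\Big(\tfrac{(\log N)^2}{N}+\big(\tfrac tN\big)^{k-1}\Big),$$ and $$\Big|a_N(t)-1-\mu_k\big(\tfrac tN\big)^{k-2}\Big|\le\beta''(r)\,\frac{|Z_N(t)|+P_N(t)}{N}+C\Big(\tfrac{(\log N)^2}{N}+\big(\tfrac tN\big)^{k-1}\Big).$$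
   Context: Poisson random hypergraph: vertex set $\{1,\dots,N\}$; $(\beta_j)_{j\ge2}$ nonnegative reals, $\beta(t)=\sum_{j\ge2}\beta_jt^j$ with $\beta'(1)<\infty$; for each $A$ with $|A|=j\ge2$, the number of hyperedges on $A$ is Poisson with mean $N\beta_j/\binom{N}{j}$, independently. A 1-edge is a patch; deleting a patched vertex $v$ removes it and replaces each other hyperedge containing $v$ by the hyperedge on its remaining vertices. Breadth-first walk: put a patch on the lowest-labelled vertex, call it $v(1)$. Having processed $v(1),\dots,v(i-1)$, the children of $v(i)$ are the not-yet-numbered vertices $w$ such that some original hyperedge consists of $v(i)$, $w$ and a subset of $\{v(1),\dots,v(i-1)\}$; they get the next numbers in order of original label, then $v(i)$ is deleted; if no numbered-but-undeleted vertex remains, a patch is placed on the lowest-labelled un-numbered vertex, which becomes the next numbered vertex. With $C_N(i)$ the number of children of $v(i)$: $Z_N(0)=0$, $Z_N(i)=Z_N(i-1)+C_N(i)-1$; $P_N(0)=1$, $P_N(i)=1-\min_{j\le i}Z_N(j)$. For integer $i$, $\lambda_2(N,i)=N\sum_{j=0}^{i}\beta_{j+2}\binom{i}{j}/\binom{N}{j+2}$; for real $t$, $\lambda_2(N,t)=\lambda_2(N,\lfloor t\rfloor)$ and $P_N(t)=P_N(\lfloor t\rfloor)$. Exponential interpolation of $Z_N$: for $1\le i\le N$ let $(E_{i,j})_{1\le j\le N-(i-1)-Z_N(i-1)-P_N(i-1)}$ be, conditionally on the past, i.i.d. exponential with rate $\lambda_2(N,i-1)$, coupled so that $C_N(i)=\#\{j:E_{i,j}\le1\}$,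 and for $0\le u\le1$ set $Z_N(i-1+u)=Z_N(i-1)-u+\sum_j\mathbb{1}_{\{E_{i,j}\le u\}}$. Finally $a_N(t)=(N-t-Z_N(t)-P_N(t))\lambda_2(N,t)$. *)

theory Defs
  imports "HOL-Analysis.Analysis"
begin

text \<open>Poisson random hypergraph on vertex set {1..N}: a realisation is described by
  H :: nat set => nat, H A = number of hyperedges on the vertex set A
  (only sets A with A a subset of {1..N} and card A >= 2 are relevant).\<close>

definition lambda2 :: "(nat \<Rightarrow> real) \<Rightarrow> nat \<Rightarrow> nat \<Rightarrow> real" where
  "lambda2 \<beta> N i = real N * (\<Sum>j=0..i. \<beta> (j+2) * real (i choose j) / real (N choose (j+2)))"

definition lambda2_real :: "(nat \<Rightarrow> real) \<Rightarrow> nat \<Rightarrow> real \<Rightarrow> real" where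
  "lambda2_real \<beta> N t = lambda2 \<beta> N (nat \<lfloor>t\<rfloor>)"

text \<open>Children of the vertex ord!i (the (i+1)-st numbered vertex), where ord is the list of
  numbered vertices in order and the first i of them have been deleted.\<close>
definition bfw_children :: "nat \<Rightarrow> (nat set \<Rightarrow> nat) \<Rightarrow> nat list \<Rightarrow> nat \<Rightarrow> nat set" where
  "bfw_children N H ord i =
     (if i < length ord then
        {w \<in> {1..N}. w \<notin> set ord \<and>
           (\<exists>A. A \<subseteq> {1..N} \<and> 0 < H A \<and> ord ! i \<in> A \<and> w \<in> A \<and> A - {ord ! i, w} \<subseteq> set (take i ord))}
      else {})"

definition bfw_step :: "nat \<Rightarrow> (nat set \<Rightarrow> nat) \<Rightarrow> nat list \<Rightarrow> nat \<Rightarrow> nat list" where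
  "bfw_step N H ord i =
     (if i < length ord then
        (let ord1 = ord @ sorted_list_of_set (bfw_children N H ord i) in
         if length ord1 = Suc i \<and> {1..N} - set ord1 \<noteq> {}
         then ord1 @ [Min ({1..N} - set ord1)] else ord1)
      else ord)"

text \<open>Numbered vertices (in order of numbering) after processing v(1),...,v(i).\<close>
primrec bfw_order :: "nat \<Rightarrow> (nat set \<Rightarrow> nat) \<Rightarrow> nat \<Rightarrow> nat list" where
  "bfw_order N H 0 = (if 1 \<le> N then [1] else [])"
| "bfw_order N H (Suc i) = bfw_step N H (bfw_order N H i) i"

text \<open>C_N(i), for i >= 1: number of children of v(i).\<close>
definition Cnum :: "nat \<Rightarrow> (nat set \<Rightarrow> nat) \<Rightarrow> nat \<Rightarrow> nat" where
  "Cnum N H i = card (bfw_children N H (bfw_order N H (i - 1)) (i - 1))"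

primrec Zw :: "nat \<Rightarrow> (nat set \<Rightarrow> nat) \<Rightarrow> nat \<Rightarrow> int" where
  "Zw N H 0 = 0"
| "Zw N H (Suc i) = Zw N H i + int (Cnum N H (Suc i)) - 1"

definition Pw :: "nat \<Rightarrow> (nat set \<Rightarrow> nat) \<Rightarrow> nat \<Rightarrow> int" where
  "Pw N H i = 1 - Min (Zw N H ` {..i})"

text \<open>Number of exponential clocks at step i (i >= 1): N-(i-1)-Z_N(i-1)-P_N(i-1).\<close>
definition Mcount :: "nat \<Rightarrow> (nat set \<Rightarrow> nat) \<Rightarrow> nat \<Rightarrow> int" where
  "Mcount N H i = int N - int (i - 1) - Zw N H (i - 1) - Pw N H (i - 1)"

text \<open>Admissible values of the exponential clocks E i j (positive reals, coupled to C_N(i)).\<close>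
definition exp_consistent :: "nat \<Rightarrow> (nat set \<Rightarrow> nat) \<Rightarrow> (nat \<Rightarrow> nat \<Rightarrow> real) \<Rightarrow> bool" where
  "exp_consistent N H E =
     (\<forall>i\<in>{1..N}. (\<forall>j. 1 \<le> j \<and> int j \<le> Mcount N H i \<longrightarrow> 0 < E i j) \<and>
        Cnum N H i = card {j. 1 \<le> j \<and> int j \<le> Mcount N H i \<and> E i j \<le> 1})"

definition Zt :: "nat \<Rightarrow> (nat set \<Rightarrow> nat) \<Rightarrow> (nat \<Rightarrow> nat \<Rightarrow> real) \<Rightarrow> real \<Rightarrow> real" where
  "Zt N H E t =
     (let i = nat \<lfloor>t\<rfloor>; u = t - real i in
      real_of_int (Zw N H i) - u +
      real (card {j. 1 \<le> j \<and> int j \<le> Mcount N H (Suc i) \<and> E (Suc i) j \<le> u}))"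

definition Pt :: "nat \<Rightarrow> (nat set \<Rightarrow> nat) \<Rightarrow> real \<Rightarrow> real" where
  "Pt N H t = real_of_int (Pw N H (nat \<lfloor>t\<rfloor>))"

definition aN :: "(nat \<Rightarrow> real) \<Rightarrow> nat \<Rightarrow> (nat set \<Rightarrow> nat) \<Rightarrow> (nat \<Rightarrow> nat \<Rightarrow> real) \<Rightarrow> real \<Rightarrow> real" where
  "aN \<beta> N H E t = (real N - t - Zt N H E t - Pt N H t) * lambda2_real \<beta> N t"

definition beta2 :: "(nat \<Rightarrow> real) \<Rightarrow> real \<Rightarrow> real" where
  "beta2 \<beta> x = (\<Sum>j. real j * real (j - 1) * \<beta> j * x ^ (j - 2))"

end

theory Submission
  imports Defs
begin


lemma pow_diff_le:
  fixes a b :: real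
  assumes "0 \<le> b" "b \<le> a" "a \<le> 1"
  shows "a ^ j - b ^ j \<le> real j * (a - b)"
proof (induction j)
  case 0 then show ?case by simp
next
  case (Suc j)
  have "a ^ Suc j - b ^ Suc j = a * (a ^ j - b ^ j) + b ^ j * (a - b)" by (simp add: algebra_simps)
  also have "\<dots> \<le> 1 * (a ^ j - b ^ j) + 1 * (a - b)"
  proof (rule add_mono)
    have "0 \<le> a ^ j - b ^ j" using assms by (simp add: power_mono)
    then show "a * (a ^ j - b ^ j) \<le> 1 * (a ^ j - b ^ j)" using assms by (intro mult_right_mono) auto
    show "b ^ j * (a - b) \<le> 1 * (a - b)" using assms
      by (intro mult_right_mono) (auto intro: power_le_one)
  qed
  also have "\<dots> \<le> real (Suc j) * (a - b)" using Suc by (simp add: algebra_simps)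
  finally show ?case .
qed

lemma binom_step_nat: "Suc j * (n choose Suc j) = (n - j) * (n choose j)"
  by (metis binomial_absorption binomial_absorb_comp)

lemma binom_step_real: "real (n choose Suc j) * (real j + 1) = real (n choose j) * (real n - real j)"
proof (cases "j \<le> n")
  case True
  have "real (Suc j * (n choose Suc j)) = real ((n - j) * (n choose j))" by (simp only: binom_step_nat)
  then show ?thesis using True by (simp add: of_nat_diff algebra_simps)
next
  case False then show ?thesis by (simp add: binomial_eq_0)
qed

lemma frac_aux:
  fixes c d p q w :: real
  assumes "w \<noteq> 0" "d \<noteq> 0" "q \<noteq> 0"
  shows "(c * p / w) / (d * q / w) = (c / d) * (p / q)"
  using assms by (simp add: field_simps)

lemma ratio_upper:
  assumes "0 < M" "i \<le> M"
  shows "real (i choose j) / real (M choose j) \<le> (real i / real M) ^ j"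
proof (induction j)
  case 0 then show ?case by simp
next
  case (Suc j)
  show ?case
  proof (cases "j < i")
    case False
    then have "i choose Suc j = 0" by simp
    then have "real (i choose Suc j) / real (M choose Suc j) = 0" by (simp only: of_nat_0 div_0)
    moreover have "0 \<le> (real i / real M) ^ Suc j" by simp
    ultimately show ?thesis by linarith
  next
    case True
    have jM: "j < M" using True assms by simp
    have pos: "0 < real (M choose j)" using jM by simp
    have e1: "real (i choose Suc j) = real (i choose j) * (real i - real j) / (real j + 1)"
      using binom_step_real[of i j] by (simp add: field_simps)
    have e2: "real (M choose Suc j) = real (M choose j) * (real M - real j) / (real j + 1)"
      using binom_step_real[of M j] by (simp add: field_simps)
    have "real (i choose Suc j) / real (M choose Suc j)
        = (real (i choose j) / real (M choose j)) * ((real i - real j) / (real M - real j))"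
      proof -
      have d: "real M - real j \<noteq> 0" "real j + 1 \<noteq> 0" "real (M choose j) \<noteq> 0" using jM pos by auto
      show ?thesis unfolding e1 e2 using d by (intro frac_aux) auto
    qed
    also have "\<dots> \<le> (real i / real M) ^ j * (real i / real M)"
    proof (rule mult_mono)
      show "(real i - real j) / (real M - real j) \<le> real i / real M"
        using jM assms True by (simp add: field_simps) (simp add: mult_right_mono flip: of_nat_mult)
    qed (use Suc True jM in \<open>auto intro!: divide_nonneg_nonneg\<close>)
    finally show ?thesis by (simp add: mult.commute)
  qed
qed

lemma ratio_lower:
  assumes "0 < M" "i \<le> M" "J \<le> i"
  shows "j \<le> J \<Longrightarrow> ((real i - real J) / real M) ^ j \<le> real (i choose j) / real (M choose j)"
proof (induction j)
  case 0 then show ?case by simp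
next
  case (Suc j)
  have jM: "j < M" "j < i" using Suc assms by auto
  have pos: "0 < real (M choose j)" using jM by simp
  have e1: "real (i choose Suc j) = real (i choose j) * (real i - real j) / (real j + 1)"
    using binom_step_real[of i j] by (simp add: field_simps)
  have e2: "real (M choose Suc j) = real (M choose j) * (real M - real j) / (real j + 1)"
    using binom_step_real[of M j] by (simp add: field_simps)
  have "((real i - real J) / real M) ^ Suc j = ((real i - real J) / real M) ^ j * ((real i - real J) / real M)"
    by simp
  also have "\<dots> \<le> (real (i choose j) / real (M choose j)) * ((real i - real j) / (real M - real j))"
  proof (rule mult_mono)
    have "(real i - real J) / real M \<le> (real i - real j) / real M"
      using Suc assms by (intro divide_right_mono) auto
    also have "\<dots> \<le> (real i - real j) / (real M - real j)"
      using jM by (intro divide_left_mono) auto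
    finally show "(real i - real J) / real M \<le> (real i - real j) / (real M - real j)" .
  qed (use Suc assms in auto)
  also have "\<dots> = real (i choose Suc j) / real (M choose Suc j)"
    proof -
      have d: "real M - real j \<noteq> 0" "real j + 1 \<noteq> 0" "real (M choose j) \<noteq> 0" using jM pos by auto
    show ?thesis unfolding e1 e2 using d by (simp add: frac_aux)
    qed
  finally show ?case .
qed

lemma binom_id:
  assumes "2 \<le> N"
  shows "real (N choose (j+2)) * (real (j+2) * real (j+1)) = real N * (real N - 1) * real ((N-2) choose j)"
proof -
  obtain m where N: "N = Suc (Suc m)" using assms by (metis add_2_eq_Suc le_Suc_ex)
  have a: "Suc (Suc j) * (Suc (Suc m) choose Suc (Suc j)) = Suc (Suc m) * (Suc m choose Suc j)"
    by (rule Suc_times_binomial)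
  have b: "Suc j * (Suc m choose Suc j) = Suc m * (m choose j)"
    by (rule Suc_times_binomial)
  have "(Suc (Suc m) choose Suc (Suc j)) * (Suc (Suc j) * Suc j) = Suc (Suc m) * (Suc m * (m choose j))"
    using a b by (metis mult.assoc mult.commute)
  then have "real (Suc (Suc m) choose Suc (Suc j)) * (real (Suc (Suc j)) * real (Suc j)) = real (Suc (Suc m)) * (real (Suc m) * real (m choose j))"
    by (metis of_nat_mult)
  moreover have "j + 2 = Suc (Suc j)" "j + 1 = Suc j" "N - 2 = m" "real N - 1 = real (Suc m)" using N by auto
  ultimately show ?thesis using N by (simp only: mult.assoc)
qed



lemma Q_bounds:
  fixes N i j :: nat and t :: real
  assumes N4: "4 \<le> N" and iN: "i \<le> N - 2" and it: "real i \<le> t" "t < real i + 1" and tN: "t \<le> real N"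
    and jk: "j \<le> k" and k3: "3 \<le> k" and ji: "j \<le> i"
  shows "\<bar>real N / (real N - 1) * (real (i choose j) / real ((N-2) choose j)) - (t / real N) ^ j\<bar> \<le> (real k + 1)^2 / real N"
proof -
  define a where "a = real i / real (N - 2)"
  define y where "y = real i / real N"
  define x where "x = t / real N"
  define R where "R = real (i choose j) / real ((N-2) choose j)"
  have Npos: "real N \<ge> 4" using N4 by simp
  have N2: "real (N - 2) = real N - 2" using N4 by simp
  have iN': "real i \<le> real N - 2" using iN N4 by (simp add: of_nat_diff)
  have i0: "0 \<le> real i" by simp
  have a1: "a \<le> 1" "0 \<le> a" unfolding a_def N2 using iN' Npos by (auto simp: field_simps)
  have ya: "y \<le> a" "0 \<le> y" unfolding a_def y_def N2 using iN' Npos i0 by (auto simp: field_simps intro!: divide_left_mono)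
  have ay: "a - y \<le> 4 / real N"
  proof -
    have "a - y = 2 * real i / (real N * (real N - 2))" unfolding a_def y_def N2 using Npos by (simp add: field_simps)
    also have "\<dots> \<le> 2 * (real N - 2) / (real N * (real N - 2))" using iN' Npos by (intro divide_right_mono) auto
    also have "\<dots> = 2 / real N" using Npos by (simp add: field_simps)
    finally have "a - y \<le> 2 / real N" .
    moreover have "2 / real N \<le> 4 / real N" using Npos by (intro divide_right_mono) auto
    ultimately show ?thesis by linarith
  qed
  have yx1: "y \<le> x" "x \<le> 1" unfolding x_def y_def using it Npos tN
    by (auto simp: field_simps intro: divide_right_mono)
  have "x - y = (t - real i) / real N" unfolding x_def y_def by (simp add: diff_divide_distrib)
  also have "\<dots> \<le> 1 / real N" using it Npos by (intro divide_right_mono) auto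
  finally have yx: "y \<le> x" "x - y \<le> 1 / real N" "x \<le> 1" using yx1 by auto
  have Rup: "R \<le> a ^ j" unfolding R_def a_def using ratio_upper[of "N-2" i j] iN N4 by simp
  have Rlo: "((real i - real j) / real (N-2)) ^ j \<le> R" unfolding R_def
    using ratio_lower[of "N-2" i j j] iN N4 ji by simp
  have lo1: "((real i - real j) / real N) ^ j \<le> ((real i - real j) / real (N-2)) ^ j"
    using ji N4 by (intro power_mono divide_left_mono) (auto simp: N2)
  have Rnn: "0 \<le> R" unfolding R_def by simp
  have fac: "real N / (real N - 1) * R = R + R / (real N - 1)" using Npos by (simp add: field_simps)
  have R1: "R \<le> 1" using Rup a1 by (meson order_trans power_le_one)
  have Rsmall: "R / (real N - 1) \<le> 2 / real N"
  proof -
    have "R / (real N - 1) \<le> 1 / (real N - 1)" using R1 Npos by (intro divide_right_mono) auto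
    also have "\<dots> \<le> 2 / real N" using Npos by (simp add: field_simps)
    finally show ?thesis .
  qed
  have up: "real N / (real N - 1) * R - x ^ j \<le> (real k + 1)^2 / real N"
  proof -
    have "a ^ j - y ^ j \<le> real j * (a - y)" using pow_diff_le[of y a j] ya a1 by simp
    also have "\<dots> \<le> real j * (4 / real N)" using ay by (intro mult_left_mono) auto
    finally have h1: "a ^ j - y ^ j \<le> 4 * real j / real N" by (simp add: mult.commute)
    have h2: "y ^ j \<le> x ^ j" using yx ya by (intro power_mono) auto
    have "real N / (real N - 1) * R - x ^ j \<le> 4 * real j / real N + 2 / real N"
      using fac Rsmall Rup h1 h2 by linarith
    also have "\<dots> \<le> (real k + 1)^2 / real N"
    proof -
      have jk': "real j \<le> real k" "3 \<le> real k" using jk k3 by auto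
      have sq: "(real k + 1)^2 = real k * real k + 2 * real k + 1" by (simp add: power2_eq_square algebra_simps)
      have "3 * real k \<le> real k * real k" using jk' by (intro mult_right_mono) auto
      then have "4 * real j + 2 \<le> (real k + 1)^2" using jk' sq by linarith
      then show ?thesis using Npos by (simp add: add_divide_distrib[symmetric] divide_right_mono)
    qed
    finally show ?thesis .
  qed
  have low: "x ^ j - real N / (real N - 1) * R \<le> (real k + 1)^2 / real N"
  proof -
    have xyj: "x ^ j - y ^ j \<le> real j * (x - y)" using pow_diff_le[of y x j] ya yx by simp
    also have "\<dots> \<le> real j * (1 / real N)" using yx by (intro mult_left_mono) auto
    finally have h1: "x ^ j - y ^ j \<le> real j / real N" by simp
    have yi: "y - real j / real N = (real i - real j) / real N" unfolding y_def by (simp add: diff_divide_distrib)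
    have nn: "0 \<le> (real i - real j) / real N" using ji by simp
    have le: "(real i - real j) / real N \<le> y" using yi nn by (simp add: field_simps)
    have "y ^ j - ((real i - real j) / real N) ^ j \<le> real j * (y - (real i - real j) / real N)"
      using pow_diff_le[of "(real i - real j) / real N" y j] nn ya yx le by linarith
    also have "y - (real i - real j) / real N = real j / real N" using yi by linarith
    finally have "y ^ j - ((real i - real j) / real N) ^ j \<le> real j * (real j / real N)" .
    then have h2: "y ^ j - R \<le> real j * real j / real N" using Rlo lo1 by simp
    have h3: "R \<le> real N / (real N - 1) * R" using fac Rnn Npos by simp
    have "x ^ j - real N / (real N - 1) * R \<le> real j / real N + real j * real j / real N"
      using h1 h2 h3 by linarith
    also have "\<dots> \<le> (real k + 1)^2 / real N"
    proof -
      have jk': "real j \<le> real k" using jk by auto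
      have sq: "(real k + 1)^2 = real k * real k + 2 * real k + 1" by (simp add: power2_eq_square algebra_simps)
      have "real j * real j \<le> real k * real k" using jk' by (intro mult_mono) auto
      then have "real j + real j * real j \<le> (real k + 1)^2" using jk' sq by linarith
      then show ?thesis using Npos by (simp add: add_divide_distrib[symmetric] divide_right_mono)
    qed
    finally show ?thesis .
  qed
  show ?thesis using up low unfolding x_def R_def by linarith
qed



lemma term_aux:
  fixes c d w n e \<beta> :: real
  assumes "c * w = n * (n - 1) * d" "c \<noteq> 0" "d \<noteq> 0" "w \<noteq> 0" "n \<noteq> 0" "n - 1 \<noteq> 0"
  shows "n * (n * (\<beta> * e / c)) = \<beta> * w * (n / (n - 1) * (e / d))"
proof -
  have c: "c = n * (n - 1) * d / w" using assms by (simp add: field_simps)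
  show ?thesis unfolding c using assms by (simp add: field_simps)
qed

lemma main_est:
  fixes \<beta> :: "nat \<Rightarrow> real" and k N :: nat and r t \<rho> :: real and b :: "nat \<Rightarrow> real"
  assumes nonneg: "\<And>j. 2 \<le> j \<Longrightarrow> 0 \<le> \<beta> j" and k3: "3 \<le> k"
    and b_def: "\<And>j. b j = \<beta> (j+2) * real (j+2) * real (j+1)"
    and rho: "0 < \<rho>" "\<rho> < 1"
    and sumb: "summable (\<lambda>j. b j * \<rho>^j)"
    and N4: "4 \<le> N" and Nr: "r * real N \<le> \<rho> * (real N - 2)"
    and t: "0 \<le> t" "t \<le> r * real N"
  shows "\<bar>real N * lambda2 \<beta> N (nat \<lfloor>t\<rfloor>) - (\<Sum>j=0..k-2. b j * (t / real N)^j)\<bar>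
     \<le> (\<Sum>j=0..k-2. b j) * (real k + 1)^2 / real N
        + 2^k * suminf (\<lambda>j. b j * \<rho>^j) / \<rho>^(k-1) * (t / real N)^(k-1)"
proof -
  define i where "i = nat \<lfloor>t\<rfloor>"
  define x where "x = t / real N"
  define a where "a = real i / real (N - 2)"
  define Q where "Q j = real N / (real N - 1) * (real (i choose j) / real ((N-2) choose j))" for j
  define B where "B = suminf (\<lambda>j. b j * \<rho>^j)"
  have Npos: "real N \<ge> 4" using N4 by simp
  have N2: "real (N - 2) = real N - 2" using N4 by simp
  have it: "real i \<le> t" "t < real i + 1" unfolding i_def using t by linarith+
  have tN: "t \<le> \<rho> * (real N - 2)" using t Nr by linarith
  have tN2: "t \<le> real N - 2"
  proof -
    have "\<rho> * (real N - 2) \<le> 1 * (real N - 2)" using rho Npos by (intro mult_right_mono) auto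
    then show ?thesis using tN by simp
  qed
  have iN: "i \<le> N - 2" using it tN2 N2 by (smt (verit) of_nat_le_iff)
  have bnn: "0 \<le> b j" for j unfolding b_def using nonneg[of "j+2"] by simp
  have x01: "0 \<le> x" "x \<le> 1" unfolding x_def using t tN2 Npos by auto
  have eq1: "real N * lambda2 \<beta> N i = (\<Sum>j=0..i. b j * Q j)"
  proof -
    have "real N * lambda2 \<beta> N i = (\<Sum>j=0..i. real N * (real N * (\<beta> (j+2) * real (i choose j) / real (N choose (j+2)))))"
      unfolding lambda2_def by (simp add: sum_distrib_left)
    also have "\<dots> = (\<Sum>j=0..i. b j * Q j)"
    proof (rule sum.cong)
      fix j assume j: "j \<in> {0..i}"
      have jN: "j \<le> N - 2" using j iN by simp
      have d: "real ((N-2) choose j) \<noteq> 0" using jN by simp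
      have c: "real (N choose (j+2)) \<noteq> 0" using jN N4 by simp
      show "real N * (real N * (\<beta> (j+2) * real (i choose j) / real (N choose (j+2)))) = b j * Q j"
        unfolding b_def Q_def mult.assoc[symmetric]
        using term_aux[OF binom_id[of N j] c d] N4 Npos
        by (simp add: mult.assoc)
    qed simp
    finally show ?thesis .
  qed
  define T where "T = {0..i} - {..k-2}"
  have split: "(\<Sum>j=0..i. b j * Q j) = (\<Sum>j=0..k-2. if j \<le> i then b j * Q j else 0) + (\<Sum>j\<in>T. b j * Q j)"
  proof -
    have "(\<Sum>j=0..i. b j * Q j) = (\<Sum>j\<in>{0..i} \<inter> {..k-2}. b j * Q j) + (\<Sum>j\<in>T. b j * Q j)"
      unfolding T_def by (rule sum.Int_Diff) simp
    also have "{0..i} \<inter> {..k-2} = {0..k-2} \<inter> {..i}" by auto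
    also have "(\<Sum>j\<in>{0..k-2} \<inter> {..i}. b j * Q j) = (\<Sum>j=0..k-2. if j \<le> i then b j * Q j else 0)"
      by (subst sum.inter_restrict) auto
    finally show ?thesis .
  qed
  have head: "\<bar>(\<Sum>j=0..k-2. if j \<le> i then b j * Q j else 0) - (\<Sum>j=0..k-2. b j * x^j)\<bar>
      \<le> (\<Sum>j=0..k-2. b j) * (real k + 1)^2 / real N"
  proof -
    have "\<bar>(\<Sum>j=0..k-2. if j \<le> i then b j * Q j else 0) - (\<Sum>j=0..k-2. b j * x^j)\<bar>
        = \<bar>\<Sum>j=0..k-2. (if j \<le> i then b j * Q j else 0) - b j * x^j\<bar>"
      by (simp add: sum_subtractf)
    also have "\<dots> \<le> (\<Sum>j=0..k-2. \<bar>(if j \<le> i then b j * Q j else 0) - b j * x^j\<bar>)"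
      by (rule sum_abs)
    also have "\<dots> \<le> (\<Sum>j=0..k-2. b j * ((real k + 1)^2 / real N))"
    proof (rule sum_mono)
      fix j assume j: "j \<in> {0..k-2}"
      show "\<bar>(if j \<le> i then b j * Q j else 0) - b j * x^j\<bar> \<le> b j * ((real k + 1)^2 / real N)"
      proof (cases "j \<le> i")
        case True
        have "\<bar>Q j - x^j\<bar> \<le> (real k + 1)^2 / real N"
          unfolding Q_def x_def
          by (rule Q_bounds[OF N4 iN it _ _ k3 True]) (use tN2 j in auto)
        then have "b j * \<bar>Q j - x^j\<bar> \<le> b j * ((real k + 1)^2 / real N)"
          using bnn by (intro mult_left_mono) auto
        then show ?thesis using True bnn by (simp add: abs_mult right_diff_distrib[symmetric])
      next
        case False
        have j1: "1 \<le> j" using False by simp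
        have "x^j \<le> x^1" using x01 j1 by (intro power_decreasing) auto
        also have "x < (real i + 1) / real N" unfolding x_def using it Npos by (intro divide_strict_right_mono) auto
        also have "(real i + 1) / real N \<le> real k / real N"
          using False j Npos k3 by (intro divide_right_mono) auto
        also have "real k / real N \<le> (real k + 1)^2 / real N"
        proof -
          have kk: "0 \<le> real k * real k" by simp
          have "real k \<le> (real k + 1)^2" using kk by (simp add: power2_eq_square algebra_simps)
          then show ?thesis using Npos by (intro divide_right_mono) auto
        qed
        finally have "x^j \<le> (real k + 1)^2 / real N" by simp
        then have "b j * x^j \<le> b j * ((real k + 1)^2 / real N)" using bnn by (intro mult_left_mono) auto
        then show ?thesis using False bnn x01 by simp
      qed
    qed
    also have "\<dots> = (\<Sum>j=0..k-2. b j) * ((real k + 1)^2 / real N)"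
      by (rule sum_distrib_right[symmetric])
    also have "\<dots> = (\<Sum>j=0..k-2. b j) * (real k + 1)^2 / real N" by simp
    finally show ?thesis .
  qed
  have a_le: "a \<le> \<rho>" "a \<le> 2 * x" "0 \<le> a"
  proof -
    show "a \<le> \<rho>" unfolding a_def N2 using it tN Npos by (simp add: field_simps)
    have "real i / (real N - 2) \<le> t / (real N - 2)" using it Npos by (intro divide_right_mono) auto
    also have "\<dots> \<le> t / (real N / 2)" using t Npos by (intro divide_left_mono) auto
    also have "\<dots> = 2 * x" unfolding x_def by simp
    finally show "a \<le> 2 * x" unfolding a_def N2 .
    show "0 \<le> a" unfolding a_def by simp
  qed
  have tail_nn: "0 \<le> (\<Sum>j\<in>T. b j * Q j)"
    using bnn Npos by (intro sum_nonneg mult_nonneg_nonneg) (auto simp: Q_def)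
  have tail: "(\<Sum>j\<in>T. b j * Q j) \<le> 2^k * B / \<rho>^(k-1) * x^(k-1)"
  proof -
    have "(\<Sum>j\<in>T. b j * Q j) \<le> (\<Sum>j\<in>T. (2^k * x^(k-1) / \<rho>^(k-1)) * (b j * \<rho>^j))"
    proof (rule sum_mono)
      fix j assume j: "j \<in> T"
      have jk: "k - 1 \<le> j" using j unfolding T_def by auto
      have Q1: "Q j \<le> real N / (real N - 1) * a^j"
        unfolding Q_def a_def using ratio_upper[of "N-2" i j] N4 iN Npos by (intro mult_left_mono) auto
      have Q2: "real N / (real N - 1) * a^j \<le> 2 * a^j"
        using Npos a_le by (intro mult_right_mono) (auto simp: field_simps)
      have "a^j = a^(k-1) * a^(j-(k-1))" using jk by (simp flip: power_add)
      also have "\<dots> \<le> (2*x)^(k-1) * \<rho>^(j-(k-1))"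
        using a_le by (intro mult_mono power_mono) auto
      also have "\<rho>^(j-(k-1)) = \<rho>^j / \<rho>^(k-1)" using jk rho by (simp add: power_diff)
      finally have "2 * a^j \<le> 2 * (2*x)^(k-1) * (\<rho>^j / \<rho>^(k-1))" by simp
      also have "2 * (2*x)^(k-1) = 2^k * x^(k-1)"
      proof -
        have kk: "k = Suc (k - 1)" using k3 by simp
        have "(2::real)^k = 2 * 2^(k-1)" by (subst kk) simp
        then show ?thesis by (simp add: power_mult_distrib)
      qed
      finally have "Q j \<le> 2^k * x^(k-1) * (\<rho>^j / \<rho>^(k-1))" using Q1 Q2 by linarith
      then have "b j * Q j \<le> b j * (2^k * x^(k-1) * (\<rho>^j / \<rho>^(k-1)))" using bnn by (intro mult_left_mono) auto
      then show "b j * Q j \<le> (2^k * x^(k-1) / \<rho>^(k-1)) * (b j * \<rho>^j)" by (simp add: field_simps)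
    qed
    also have "\<dots> = (2^k * x^(k-1) / \<rho>^(k-1)) * (\<Sum>j\<in>T. b j * \<rho>^j)" by (simp add: sum_distrib_left)
    also have "\<dots> \<le> (2^k * x^(k-1) / \<rho>^(k-1)) * B"
      unfolding B_def using x01 rho bnn
      by (intro mult_left_mono sum_le_suminf[OF sumb]) (auto simp: T_def)
    finally show ?thesis by (simp add: field_simps)
  qed
  have "real N * lambda2 \<beta> N i - (\<Sum>j=0..k-2. b j * x^j)
      = ((\<Sum>j=0..k-2. if j \<le> i then b j * Q j else 0) - (\<Sum>j=0..k-2. b j * x^j)) + (\<Sum>j\<in>T. b j * Q j)"
    using eq1 split by simp
  then have "\<bar>real N * lambda2 \<beta> N i - (\<Sum>j=0..k-2. b j * x^j)\<bar>
      \<le> (\<Sum>j=0..k-2. b j) * (real k + 1)^2 / real N + 2^k * B / \<rho>^(k-1) * x^(k-1)"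
    using head tail tail_nn by linarith
  then show ?thesis unfolding i_def x_def B_def .
qed



lemma children_sub: "bfw_children N H ord i \<subseteq> {1..N} - set ord"
  unfolding bfw_children_def by auto

lemma step_sup: "set ord \<union> bfw_children N H ord i \<subseteq> set (bfw_step N H ord i)"
proof (cases "i < length ord")
  case True
  have fin: "finite (bfw_children N H ord i)" using children_sub
    by (meson finite_Diff finite_atLeastAtMost finite_subset)
  show ?thesis using True fin unfolding bfw_step_def by (auto simp: Let_def)
next
  case False then show ?thesis unfolding bfw_step_def bfw_children_def by simp
qed

lemma children_card_sum:
  "(\<Sum>m<n. card (bfw_children N H (bfw_order N H m) m)) \<le> card (set (bfw_order N H n) \<inter> {1..N})"
proof (induction n)
  case 0 then show ?case by simp
next
  case (Suc n)
  let ?A = "set (bfw_order N H n) \<inter> {1..N}"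
  let ?B = "bfw_children N H (bfw_order N H n) n"
  have dis: "?A \<inter> ?B = {}" using children_sub[of N H "bfw_order N H n" n] by auto
  have sub: "?A \<union> ?B \<subseteq> set (bfw_order N H (Suc n)) \<inter> {1..N}"
    using step_sup[of "bfw_order N H n" N H n] children_sub[of N H "bfw_order N H n" n] by auto
  have finB: "finite ?B" using children_sub
    by (meson finite_Diff finite_atLeastAtMost finite_subset)
  have "card ?A + card ?B = card (?A \<union> ?B)" using dis finB by (simp add: card_Un_disjoint)
  also have "\<dots> \<le> card (set (bfw_order N H (Suc n)) \<inter> {1..N})" using sub by (intro card_mono) auto
  finally show ?case using Suc by simp
qed

lemma children_sum_le: "(\<Sum>m<n. card (bfw_children N H (bfw_order N H m) m)) \<le> N"
proof -
  have "card (set (bfw_order N H n) \<inter> {1..N}) \<le> card {1..N}" by (intro card_mono) auto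
  then show ?thesis using children_card_sum[where n=n and N=N and H=H] by simp
qed

lemma Zw_eq: "Zw N H n = int (\<Sum>m<n. card (bfw_children N H (bfw_order N H m) m)) - int n"
  by (induction n) (auto simp: Cnum_def)

lemma Zw_upper: "Zw N H n \<le> int N - int n"
  using Zw_eq[of N H n] children_sum_le[where n=n and N=N and H=H] by (simp del: of_nat_sum)

lemma Zw_lower: "Zw N H n \<ge> - int n"
  using Zw_eq[of N H n] by (simp del: of_nat_sum)

lemma Pw_bounds: "1 \<le> Pw N H n" "Pw N H n \<le> 1 + int n"
proof -
  have fin: "finite (Zw N H ` {..n})" "Zw N H ` {..n} \<noteq> {}" by auto
  have z: "Zw N H 0 \<in> Zw N H ` {..n}" by blast
  have "Min (Zw N H ` {..n}) \<le> Zw N H 0" using fin z by (intro Min_le) blast+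
  moreover have "Zw N H 0 = 0" by simp
  ultimately show "1 \<le> Pw N H n" unfolding Pw_def by linarith
  have "- int n \<le> Min (Zw N H ` {..n})" using fin
    by (subst Min_ge_iff) (auto intro: order_trans[OF _ Zw_lower])
  then show "Pw N H n \<le> 1 + int n" unfolding Pw_def by linarith
qed

lemma Zt_bound:
  assumes ec: "exp_consistent N H E" and t0: "0 \<le> t" and iN: "nat \<lfloor>t\<rfloor> < N"
  shows "\<bar>Zt N H E t\<bar> \<le> real N + 1"
proof -
  define i where "i = nat \<lfloor>t\<rfloor>"
  define u where "u = t - real i"
  have u: "0 \<le> u" "u < 1" unfolding u_def i_def using t0 by linarith+
  define M where "M = Mcount N H (Suc i)"
  define S where "S = {j. 1 \<le> j \<and> int j \<le> M \<and> E (Suc i) j \<le> u}"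
  define S1 where "S1 = {j. 1 \<le> j \<and> int j \<le> M \<and> E (Suc i) j \<le> 1}"
  have fin: "finite S1" unfolding S1_def
    by (rule finite_subset[of _ "{..nat M}"]) auto
  have sub: "S \<subseteq> S1" unfolding S_def S1_def using u by auto
  have "Suc i \<in> {1..N}" using iN unfolding i_def by simp
  then have cn: "Cnum N H (Suc i) = card S1" using ec unfolding exp_consistent_def S1_def M_def by blast
  have cS: "card S \<le> Cnum N H (Suc i)" using card_mono[OF fin sub] cn by simp
  have zu: "Zw N H (Suc i) \<le> int N - int (Suc i)" by (rule Zw_upper)
  have zl: "Zw N H i \<ge> - int i" by (rule Zw_lower)
  have zs: "Zw N H (Suc i) = Zw N H i + int (Cnum N H (Suc i)) - 1" by simp
  have Zt_eq: "Zt N H E t = real_of_int (Zw N H i) - u + real (card S)"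
    unfolding Zt_def S_def M_def u_def i_def Let_def by simp
  have up: "real_of_int (Zw N H i) + real (card S) \<le> real N - real i"
  proof -
    have "Zw N H i + int (card S) \<le> int N - int i" using zu zs cS by linarith
    then show ?thesis by linarith
  qed
  have lo: "real_of_int (Zw N H i) \<ge> - real i" using zl by linarith
  have "real i \<le> real N" using iN unfolding i_def by simp
  then show ?thesis unfolding Zt_eq using up lo u by (simp add: abs_le_iff)
qed

lemma Pt_bound:
  assumes iN: "nat \<lfloor>t\<rfloor> < N"
  shows "1 \<le> Pt N H t" "Pt N H t \<le> real N"
proof -
  show "1 \<le> Pt N H t" unfolding Pt_def using Pw_bounds(1)[of N H "nat \<lfloor>t\<rfloor>"] by linarith
  have "Pw N H (nat \<lfloor>t\<rfloor>) \<le> 1 + int (nat \<lfloor>t\<rfloor>)" by (rule Pw_bounds(2))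
  then show "Pt N H t \<le> real N" unfolding Pt_def using iN by linarith
qed

lemma lambda2_nonneg:
  assumes "\<And>j. 2 \<le> j \<Longrightarrow> 0 \<le> \<beta> j"
  shows "0 \<le> lambda2 \<beta> N i"
  unfolding lambda2_def using assms
  by (intro mult_nonneg_nonneg sum_nonneg divide_nonneg_nonneg) auto


theorem lemma6p2:
  fixes \<beta> :: "nat \<Rightarrow> real" and k :: nat and r :: real
  assumes nonneg: "\<And>j. 2 \<le> j \<Longrightarrow> 0 \<le> \<beta> j"
    and deriv_finite: "summable (\<lambda>j. real j * \<beta> j)"
    and k3: "3 \<le> k"
    and beta_low: "\<And>j. 2 \<le> j \<Longrightarrow> j \<le> k - 1 \<Longrightarrow> \<beta> j = 1 / (real j * (real j - 1))"
    and r: "0 \<le> r" "r < 1"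
  shows "\<exists>C::real. \<exists>N0::nat. \<forall>N\<ge>N0. \<forall>t::real. 0 \<le> t \<and> t \<le> r * real N \<longrightarrow>
     \<bar>real N * lambda2_real \<beta> N t
        - ((\<Sum>i=0..k-3. (t / real N) ^ i) + real k * (real k - 1) * \<beta> k * (t / real N) ^ (k - 2))\<bar>
       \<le> C * ((ln (real N))\<^sup>2 / real N + (t / real N) ^ (k - 1))
     \<and> (\<forall>H E. exp_consistent N H E \<longrightarrow>
        \<bar>aN \<beta> N H E t - 1 - (real k * (real k - 1) * \<beta> k - 1) * (t / real N) ^ (k - 2)\<bar>
          \<le> beta2 \<beta> r * (\<bar>Zt N H E t\<bar> + Pt N H t) / real N
             + C * ((ln (real N))\<^sup>2 / real N + (t / real N) ^ (k - 1)))"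
proof -
  define b where "b j = \<beta> (j+2) * real (j+2) * real (j+1)" for j
  define \<rho> where "\<rho> = (1 + r) / 2"
  have rho: "0 < \<rho>" "\<rho> < 1" "r \<le> \<rho>" unfolding \<rho>_def using r by auto
  have bnn: "0 \<le> b j" for j unfolding b_def using nonneg[of "j+2"] by simp
  have geo: "real (j+1) * \<rho>^j \<le> 1 / (1 - \<rho>)" for j
  proof -
    have "real (j+1) * \<rho>^j = (\<Sum>m\<le>j. \<rho>^j)" by simp
    also have "\<dots> \<le> (\<Sum>m\<le>j. \<rho>^m)" using rho by (intro sum_mono power_decreasing) auto
    also have "\<dots> = (1 - \<rho>^Suc j) / (1 - \<rho>)" using sum_gp_basic[of \<rho> j] rho by (simp add: field_simps)
    also have "\<dots> \<le> 1 / (1 - \<rho>)" using rho by (intro divide_right_mono) auto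
    finally show ?thesis .
  qed
  have sd: "summable (\<lambda>j. real (j+2) * \<beta> (j+2))"
    using summable_iff_shift[of "\<lambda>j. real j * \<beta> j" 2] deriv_finite by simp
  have sumb: "summable (\<lambda>j. b j * \<rho>^j)"
  proof (rule summable_comparison_test)
    show "summable (\<lambda>j. real (j+2) * \<beta> (j+2) * (1 / (1 - \<rho>)))" using sd by (rule summable_mult2)
    have "norm (b j * \<rho>^j) \<le> real (j+2) * \<beta> (j+2) * (1 / (1 - \<rho>))" for j
    proof -
      have "norm (b j * \<rho>^j) = (real (j+2) * \<beta> (j+2)) * (real (j+1) * \<rho>^j)"
        using nonneg[of "j+2"] rho unfolding b_def by (simp add: abs_mult)
      also have "\<dots> \<le> real (j+2) * \<beta> (j+2) * (1 / (1 - \<rho>))"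
        using geo[of j] nonneg[of "j+2"] by (intro mult_left_mono) auto
      finally show ?thesis .
    qed
    then show "\<exists>N. \<forall>n\<ge>N. norm (b n * \<rho>^n) \<le> real (n+2) * \<beta> (n+2) * (1 / (1 - \<rho>))" by blast
  qed
  have sumr: "summable (\<lambda>j. b j * r^j)"
  proof (rule summable_comparison_test)
    show "summable (\<lambda>j. b j * \<rho>^j)" by (rule sumb)
    show "\<exists>N. \<forall>n\<ge>N. norm (b n * r^n) \<le> b n * \<rho>^n"
      using bnn r rho by (auto simp: abs_mult intro!: mult_left_mono power_mono)
  qed
  define g where "g j = real j * real (j - 1) * \<beta> j * r ^ (j - 2)" for j
  have gshift: "g (j + 2) = b j * r^j" for j unfolding g_def b_def by (simp add: algebra_simps)
  have beta2_eq: "beta2 \<beta> r = suminf (\<lambda>j. b j * r^j)"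
  proof -
    have sg: "summable g" using summable_iff_shift[of g 2] sumr gshift by simp
    have "beta2 \<beta> r = suminf g" unfolding beta2_def g_def by simp
    also have "\<dots> = (\<Sum>n. g (n + 2)) + (\<Sum>i<2. g i)" by (rule suminf_split_initial_segment[OF sg])
    also have "(\<Sum>i<2. g i) = 0" unfolding g_def by (simp add: numeral_2_eq_2)
    finally show ?thesis using gshift by simp
  qed
  define Bs where "Bs = (\<Sum>j=0..k-2. b j)"
  define B where "B = suminf (\<lambda>j. b j * \<rho>^j)"
  have Bnn: "0 \<le> B" unfolding B_def using bnn rho by (intro suminf_nonneg[OF sumb]) auto
  have Bsnn: "0 \<le> Bs" unfolding Bs_def using bnn by (intro sum_nonneg) auto
  define K where "K = Bs * (real k + 1)^2 + 2^k * B / \<rho>^(k-1)"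
  define c where "c = b (k-2)"
  have cnn: "0 \<le> c" unfolding c_def by (rule bnn)
  have c_eq: "real k * (real k - 1) * \<beta> k = c"
  proof -
    have kk: "k - 2 + 2 = k" "real (k - 2 + 1) = real k - 1" "real (k - 2 + 2) = real k" using k3 by auto
    show ?thesis unfolding c_def b_def kk by (simp add: algebra_simps)
  qed
  have K1: "0 \<le> Bs * (real k + 1)^2" using Bsnn by simp
  have K2: "0 \<le> 2^k * B / \<rho>^(k-1)" using Bnn rho by simp
  define C where "C = 4 * K + c"
  define N0 where "N0 = nat \<lceil>4 / (1 - r)\<rceil> + 4"
  have S_eq: "(\<Sum>i=0..k-3. x ^ i) + real k * (real k - 1) * \<beta> k * x ^ (k - 2) = (\<Sum>j=0..k-2. b j * x^j)" for x :: real
  proof -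
    have k2: "k - 2 = Suc (k - 3)" using k3 by simp
    have "(\<Sum>j=0..k-2. b j * x^j) = (\<Sum>j=0..k-3. b j * x^j) + b (k-2) * x^(k-2)"
      unfolding k2 by (simp add: sum.atLeast0_atMost_Suc)
    also have "(\<Sum>j=0..k-3. b j * x^j) = (\<Sum>j=0..k-3. x^j)"
    proof (rule sum.cong)
      fix j assume j: "j \<in> {0..k-3}"
      have "\<beta> (j+2) = 1 / (real (j+2) * (real (j+2) - 1))" using j k3 by (intro beta_low) auto
      moreover have w: "real (j+2) * (real (j+2) - 1) \<noteq> 0" by simp
      moreover have "b j = \<beta> (j+2) * (real (j+2) * (real (j+2) - 1))" unfolding b_def by (simp add: algebra_simps)
      ultimately have "b j = 1" by simp
      then show "b j * x^j = x^j" by simp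
    qed simp
    finally show ?thesis using c_eq c_def by simp
  qed
  have gp: "(1 - x) * (\<Sum>j=0..k-3. x^j) = 1 - x^(k-2)" for x :: real
  proof -
    have k2: "k - 2 = Suc (k - 3)" using k3 by simp
    show ?thesis unfolding k2 atLeast0AtMost by (rule sum_gp_basic)
  qed
  show ?thesis
  proof (intro exI allI impI conjI)
    fix N :: nat and t :: real
    assume N: "N0 \<le> N" and tt: "0 \<le> t \<and> t \<le> r * real N"
    have t: "0 \<le> t" "t \<le> r * real N" using tt by auto
    have N4: "4 \<le> N" using N unfolding N0_def by simp
    have Npos: "real N \<ge> 4" using N4 by simp
    have Nr1: "4 / (1 - r) \<le> real N" using N unfolding N0_def by linarith
    then have Nr2: "4 \<le> real N * (1 - r)" using r by (simp add: field_simps)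
    have Nr: "r * real N \<le> \<rho> * (real N - 2)" unfolding \<rho>_def using Nr2 r by (simp add: field_simps)
    define x where "x = t / real N"
    define L where "L = (ln (real N))\<^sup>2 / real N"
    define Lam where "Lam = real N * lambda2 \<beta> N (nat \<lfloor>t\<rfloor>)"
    define S where "S = (\<Sum>j=0..k-2. b j * x^j)"
    have x01: "0 \<le> x" "x \<le> r" unfolding x_def using t Npos by (auto simp: field_simps)
    have est: "\<bar>Lam - S\<bar> \<le> Bs * (real k + 1)^2 / real N + 2^k * B / \<rho>^(k-1) * x^(k-1)"
      unfolding Lam_def S_def Bs_def B_def x_def
      by (rule main_est[OF nonneg k3 b_def rho(1,2) sumb N4 Nr t])
    have lnN: "1 \<le> ln (real N)"
    proof -
      have "exp 1 \<le> real N" using exp_le Npos by linarith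
      then show ?thesis using Npos by (subst ln_ge_iff) auto
    qed
    have LN: "1 / real N \<le> L" unfolding L_def using lnN Npos
      by (intro divide_right_mono) (auto simp: power2_eq_square intro: order_trans[OF _ mult_mono[of 1 _ 1]])
    have xk: "0 \<le> x^(k-1)" using x01 by simp
    have E1: "\<bar>Lam - S\<bar> \<le> K * (L + x^(k-1))"
    proof -
      have a1: "Bs * (real k + 1)^2 / real N \<le> Bs * (real k + 1)^2 * L"
        using LN K1 by (simp add: mult_left_mono divide_inverse flip: inverse_eq_divide)
      have a2: "Bs * (real k + 1)^2 * L \<le> K * L" unfolding K_def using K2 LN Npos
        by (intro mult_right_mono) (auto intro: order_trans[OF _ LN])
      have a3: "2^k * B / \<rho>^(k-1) * x^(k-1) \<le> K * x^(k-1)" unfolding K_def using K1 xk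
        by (intro mult_right_mono) auto
      show ?thesis using est a1 a2 a3 by (simp add: distrib_left)
    qed
    have Kn: "0 \<le> K" unfolding K_def using K1 K2 by simp
    have Ln: "0 \<le> L" unfolding L_def by simp
    have KC: "K * (L + x^(k-1)) \<le> C * (L + x^(k-1))" unfolding C_def
      using Kn cnn Ln xk by (intro mult_right_mono) auto
    show "\<bar>real N * lambda2_real \<beta> N t
        - ((\<Sum>i=0..k-3. (t / real N) ^ i) + real k * (real k - 1) * \<beta> k * (t / real N) ^ (k - 2))\<bar>
       \<le> C * ((ln (real N))\<^sup>2 / real N + (t / real N) ^ (k - 1))"
      using E1 KC S_eq[of x] unfolding Lam_def S_def L_def x_def lambda2_real_def by simp
    fix H E assume ec: "exp_consistent N H E"
    have iN: "nat \<lfloor>t\<rfloor> < N"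
    proof -
      have "real (nat \<lfloor>t\<rfloor>) \<le> t" using t by linarith
      also have "t \<le> real N - 2"
      proof -
        have "\<rho> * (real N - 2) \<le> 1 * (real N - 2)" using rho Npos by (intro mult_right_mono) auto
        then show ?thesis using t Nr by simp
      qed
      finally show ?thesis by linarith
    qed
    define Z where "Z = Zt N H E t"
    define P where "P = Pt N H t"
    have Zb: "\<bar>Z\<bar> \<le> real N + 1" unfolding Z_def by (rule Zt_bound[OF ec t(1) iN])
    have Pb: "1 \<le> P" "P \<le> real N" unfolding P_def using Pt_bound[OF iN] by auto
    have ZP3: "(\<bar>Z\<bar> + P) / real N \<le> 3" using Zb Pb Npos by (simp add: field_simps)
    have ZPn: "0 \<le> (\<bar>Z\<bar> + P) / real N" using Pb by simp
    have Lamn: "0 \<le> Lam" unfolding Lam_def using lambda2_nonneg[OF nonneg] by simp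
    have Sle: "S \<le> beta2 \<beta> r"
    proof -
      have "S \<le> (\<Sum>j=0..k-2. b j * r^j)" unfolding S_def using bnn x01
        by (intro sum_mono mult_left_mono power_mono) auto
      also have "\<dots> \<le> beta2 \<beta> r" unfolding beta2_eq using bnn r
        by (intro sum_le_suminf[OF sumr]) auto
      finally show ?thesis .
    qed
    have aN_eq: "aN \<beta> N H E t = (1 - x) * Lam - (Z + P) / real N * Lam"
      unfolding aN_def Lam_def x_def Z_def P_def lambda2_real_def using Npos by (simp add: field_simps)
    have main_id: "(1 - x) * S = 1 + (c - 1) * x^(k-2) - c * x^(k-1)"
    proof -
      have "(1 - x) * S = (1 - x) * ((\<Sum>i=0..k-3. x ^ i) + c * x ^ (k - 2))"
        unfolding S_def using S_eq[of x] c_eq by simp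
      also have "\<dots> = 1 - x^(k-2) + c * (x^(k-2) - x^(k-2) * x)" using gp[of x] by (simp add: algebra_simps)
      also have "x^(k-2) * x = x^(k-1)"
      proof -
        have kk: "k - 1 = Suc (k - 2)" using k3 by simp
        show ?thesis unfolding kk by (simp add: power_Suc2)
      qed
      finally show ?thesis by (simp add: algebra_simps)
    qed
    have T1: "\<bar>(1 - x) * Lam - 1 - (c - 1) * x^(k-2)\<bar> \<le> c * x^(k-1) + \<bar>Lam - S\<bar>"
    proof -
      have "(1 - x) * Lam - 1 - (c - 1) * x^(k-2) = (1 - x) * (Lam - S) - c * x^(k-1)"
        using main_id by (simp add: algebra_simps)
      moreover have "\<bar>(1 - x) * (Lam - S)\<bar> \<le> \<bar>Lam - S\<bar>"
        using x01 rho by (simp add: abs_mult mult_left_le_one_le)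
      ultimately show ?thesis using cnn xk by (smt (verit) mult_nonneg_nonneg)
    qed
    have T2: "\<bar>(Z + P) / real N * Lam\<bar> \<le> beta2 \<beta> r * (\<bar>Z\<bar> + P) / real N + 3 * \<bar>Lam - S\<bar>"
    proof -
      have "\<bar>(Z + P) / real N * Lam\<bar> \<le> (\<bar>Z\<bar> + P) / real N * Lam"
        using Lamn Pb Npos by (simp add: abs_mult) (intro mult_right_mono divide_right_mono; simp add: abs_le_iff; linarith)
      also have "\<dots> \<le> (\<bar>Z\<bar> + P) / real N * (beta2 \<beta> r + \<bar>Lam - S\<bar>)"
        using ZPn Sle by (intro mult_left_mono) auto
      also have "\<dots> = beta2 \<beta> r * (\<bar>Z\<bar> + P) / real N + (\<bar>Z\<bar> + P) / real N * \<bar>Lam - S\<bar>"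
        by (simp add: algebra_simps)
      also have "(\<bar>Z\<bar> + P) / real N * \<bar>Lam - S\<bar> \<le> 3 * \<bar>Lam - S\<bar>"
        using ZP3 by (intro mult_right_mono) auto
      finally show ?thesis by simp
    qed
    have "\<bar>aN \<beta> N H E t - 1 - (c - 1) * x^(k-2)\<bar> \<le> beta2 \<beta> r * (\<bar>Z\<bar> + P) / real N + (4 * \<bar>Lam - S\<bar> + c * x^(k-1))"
    proof -
      have e: "(1 - x) * Lam - (Z + P) / real N * Lam - 1 - (c - 1) * x^(k-2)
          = ((1 - x) * Lam - 1 - (c - 1) * x^(k-2)) - (Z + P) / real N * Lam" by simp
      show ?thesis unfolding aN_eq e
        using abs_triangle_ineq4[of "(1 - x) * Lam - 1 - (c - 1) * x^(k-2)" "(Z + P) / real N * Lam"] T1 T2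
        by linarith
    qed
    also have "4 * \<bar>Lam - S\<bar> + c * x^(k-1) \<le> C * (L + x^(k-1))"
    proof -
      have cL: "0 \<le> c * L" using cnn Ln by simp
      have eC: "C * (L + x^(k-1)) = 4 * (K * (L + x^(k-1))) + c * L + c * x^(k-1)"
        unfolding C_def by (simp add: algebra_simps)
      have h: "4 * \<bar>Lam - S\<bar> \<le> 4 * (K * (L + x^(k-1)))" using E1 by simp
      show ?thesis unfolding eC
        by (rule add_mono[OF add_increasing2[OF cL h] order_refl])
    qed
    finally show "\<bar>aN \<beta> N H E t - 1 - (real k * (real k - 1) * \<beta> k - 1) * (t / real N) ^ (k - 2)\<bar>
          \<le> beta2 \<beta> r * (\<bar>Zt N H E t\<bar> + Pt N H t) / real N
             + C * ((ln (real N))\<^sup>2 / real N + (t / real N) ^ (k - 1))"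
      unfolding c_eq Z_def P_def L_def x_def by simp
  qed
qed

end
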